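(* Let $R$ be an abelian Rickart $*$-ring and $a,b\in R$. The following are equivalent: (i) $a\leq b$ in the natural partial order; (ii) there exists a projection $e\in R$ with $a=ae=be$; (iii) $ab=a^2=ba$.
   Context: A projection is $e$ with $e=e^2=e^*$. A Rickart $*$-ring is a $*$-ring in which the right annihilator $\{x: ax=0\}$ of every element $a$ is of the form $eR$ for a projection $e$ (such rings have unity). A ring is abelian if all its idempotents are central. Natural partial order: $a\leq b$ iff there is $x\in R$ with $a=xa=xb=ax^*=bx^*$. *)

theory Defs
  imports Main
begin

definition star_ring :: "('a::ring \<Rightarrow> 'a) \<Rightarrow> bool" where
  "star_ring st \<longleftrightarrow>
     (\<forall>x y. st (x + y) = st x + st y) \<and>
     (\<forall>x y. st (x * y) = st y * st x) \<and>
     (\<forall>x. st (st x) = x)"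

definition projection :: "('a::ring \<Rightarrow> 'a) \<Rightarrow> 'a \<Rightarrow> bool" where
  "projection st e \<longleftrightarrow> e = e * e \<and> e = st e"

definition right_annihilator :: "'a::ring \<Rightarrow> 'a set" where
  "right_annihilator a = {x. a * x = 0}"

definition rickart_star_ring :: "('a::ring \<Rightarrow> 'a) \<Rightarrow> bool" where
  "rickart_star_ring st \<longleftrightarrow> star_ring st \<and>
     (\<forall>a::'a. \<exists>e. projection st e \<and> right_annihilator a = {e * r | r. True})"

definition abelian_ring :: "'a::ring itself \<Rightarrow> bool" where
  "abelian_ring _ \<longleftrightarrow> (\<forall>e::'a. e * e = e \<longrightarrow> (\<forall>x. e * x = x * e))"

definition natural_le :: "('a::ring \<Rightarrow> 'a) \<Rightarrow> 'a \<Rightarrow> 'a \<Rightarrow> bool" where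
  "natural_le st a b \<longleftrightarrow>
     (\<exists>x. a = x * a \<and> a = x * b \<and> a = a * st x \<and> a = b * st x)"

end

theory Submission
  imports Defs
begin

theorem mainTheorem8:
  fixes st :: "'a::ring \<Rightarrow> 'a" and a b :: 'a
  assumes "rickart_star_ring st"
    and "abelian_ring TYPE('a)"
  shows "(natural_le st a b \<longleftrightarrow> (\<exists>e. projection st e \<and> a = a * e \<and> a = b * e))
       \<and> ((\<exists>e. projection st e \<and> a = a * e \<and> a = b * e) \<longleftrightarrow> (a * b = a * a \<and> a * a = b * a))"
proof -
  have cen: "\<And>e x::'a. e * e = e \<Longrightarrow> e * x = x * e"
    using assms(2) unfolding abelian_ring_def by blast
  obtain e where ep: "projection st e" and ann: "right_annihilator (a - b) = {e * r | r. True}"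
    using assms(1) unfolding rickart_star_ring_def by blast
  have ee: "e * e = e" using ep unfolding projection_def by simp
  have memD: "\<And>y. (a - b) * y = 0 \<Longrightarrow> e * y = y"
  proof -
    fix y assume "(a - b) * y = 0"
    then have "y \<in> right_annihilator (a - b)" unfolding right_annihilator_def by simp
    then obtain r where "y = e * r" using ann by blast
    then show "e * y = y" using ee by (simp add: mult.assoc[symmetric])
  qed
  have "e \<in> right_annihilator (a - b)" using ann ee by (metis (mono_tags, lifting) mem_Collect_eq)
  then have abe: "a * e = b * e" unfolding right_annihilator_def by (simp add: algebra_simps)
  have gen: "\<And>y. (a - b) * y = 0 \<Longrightarrow> a = a * y \<Longrightarrow> \<exists>e. projection st e \<and> a = a * e \<and> a = b * e"
  proof -
    fix y assume y1: "(a - b) * y = 0" and y2: "a = a * y"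
    have "e * y = y" using memD y1 .
    then have "a = a * (e * y)" using y2 by simp
    also have "\<dots> = (a * e) * y" by (simp add: mult.assoc)
    also have "\<dots> = (e * a) * y" using cen[OF ee, of a] by simp
    also have "\<dots> = e * a" using y2 by (simp add: mult.assoc)
    also have "\<dots> = a * e" using cen[OF ee, of a] by simp
    finally have "a = a * e" .
    then show "\<exists>e. projection st e \<and> a = a * e \<and> a = b * e" using ep abe by metis
  qed
  have i2: "natural_le st a b \<Longrightarrow> \<exists>e. projection st e \<and> a = a * e \<and> a = b * e"
  proof -
    assume "natural_le st a b"
    then obtain x where x: "a = x * a" "a = x * b" "a = a * st x" "a = b * st x"
      unfolding natural_le_def by blast
    have "(a - b) * st x = a * st x - b * st x" by (simp add: algebra_simps)
    also have "\<dots> = 0" using x(3,4) by simp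
    finally have "(a - b) * st x = 0" .
    then show ?thesis using gen x(3) by blast
  qed
  have i1: "\<exists>e. projection st e \<and> a = a * e \<and> a = b * e \<Longrightarrow> natural_le st a b"
  proof -
    assume "\<exists>e. projection st e \<and> a = a * e \<and> a = b * e"
    then obtain f where f: "projection st f" "a = a * f" "a = b * f" by blast
    have ff: "f * f = f" "st f = f" using f(1) unfolding projection_def by auto
    have "a = f * a" using cen[OF ff(1), of a] f(2) by simp
    moreover have "f * b = a" using cen[OF ff(1), of b] f(3) by simp
    ultimately show ?thesis unfolding natural_le_def using f ff by metis
  qed
  have i3: "\<exists>e. projection st e \<and> a = a * e \<and> a = b * e \<Longrightarrow> a * b = a * a \<and> a * a = b * a"
  proof -
    assume "\<exists>e. projection st e \<and> a = a * e \<and> a = b * e"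
    then obtain f where f: "projection st f" "a = a * f" "a = b * f" by blast
    have ff: "f * f = f" using f(1) unfolding projection_def by auto
    have "a * b = a * (f * b)" using f(2) by (metis mult.assoc)
    also have "\<dots> = a * (b * f)" using cen[OF ff, of b] by simp
    also have "\<dots> = a * a" using f(3) by simp
    finally have 1: "a * b = a * a" .
    have "b * a = b * (f * a)" using f(2) cen[OF ff, of a] by simp
    also have "\<dots> = (b * f) * a" by (simp add: mult.assoc)
    also have "\<dots> = a * a" using f(3) by simp
    finally show ?thesis using 1 by simp
  qed
  have i4: "a * b = a * a \<and> a * a = b * a \<Longrightarrow> \<exists>e. projection st e \<and> a = a * e \<and> a = b * e"
  proof -
    assume h: "a * b = a * a \<and> a * a = b * a"
    have "(a - b) * a = 0" using h by (simp add: algebra_simps)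
    moreover have "e * a = a" using memD[OF calculation] .
    ultimately show ?thesis using cen[OF ee, of a] ep abe by metis
  qed
  show ?thesis using i1 i2 i3 i4 by blast
qed

end
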